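(* Let $K$ be a field, $w(x)\in K[x]$ with $d=\deg w\ge2$, $W=K[w(x)]\subseteq K[x]$, and $U$ the $K$-subspace of $K[x]$ spanned by $x^m$ for positive integers $m$ not divisible by $d$. Every $f\in K[x]$ can be written uniquely as $f=f_1+f_2$ with $f_1\in U$, $f_2\in W$; set $\ell(f)=\deg f_1$ if $f_1\ne0$ and $\ell(f)=0$ otherwise. Then: 1) $\deg f\ge \ell(f)$ for all nonzero $f\in K[x]$; 2) for all $f,g\in K[x]$ with $f-g\in W$, we have $\ell(f)=\ell(g)$. *)

theory Defs
  imports "HOL-Computational_Algebra.Polynomial"
begin

definition polyW :: "'a::field poly \<Rightarrow> 'a poly set" where
  "polyW w = {pcompose p w | p. True}"

text \<open>U = K-span of the monomials x^m with m > 0 and d not dividing m (d = deg w).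
  A polynomial lies in this span iff all its nonzero coefficients sit at such exponents.\<close>
definition polyU :: "'a::field poly \<Rightarrow> 'a poly set" where
  "polyU w = {p. \<forall>m. coeff p m \<noteq> 0 \<longrightarrow> 0 < m \<and> \<not> degree w dvd m}"

definition Ucomp :: "'a::field poly \<Rightarrow> 'a poly \<Rightarrow> 'a poly" where
  "Ucomp w f = (THE f1. f1 \<in> polyU w \<and> f - f1 \<in> polyW w)"

definition ell :: "'a::field poly \<Rightarrow> 'a poly \<Rightarrow> nat" where
  "ell w f = (if Ucomp w f \<noteq> 0 then degree (Ucomp w f) else 0)"

end

theory Submission
  imports Defs
begin

lemma U_add: "u1 \<in> polyU w \<Longrightarrow> u2 \<in> polyU w \<Longrightarrow> u1 + u2 \<in> polyU w"
  unfolding polyU_def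
proof (intro CollectI allI impI)
  fix m assume a: "u1 \<in> {p. \<forall>m. coeff p m \<noteq> 0 \<longrightarrow> 0 < m \<and> \<not> degree w dvd m}"
    "u2 \<in> {p. \<forall>m. coeff p m \<noteq> 0 \<longrightarrow> 0 < m \<and> \<not> degree w dvd m}"
    "coeff (u1 + u2) m \<noteq> 0"
  hence "coeff u1 m \<noteq> 0 \<or> coeff u2 m \<noteq> 0" by auto
  thus "0 < m \<and> \<not> degree w dvd m" using a by blast
qed

lemma U_diff: "u1 \<in> polyU w \<Longrightarrow> u2 \<in> polyU w \<Longrightarrow> u1 - u2 \<in> polyU w"
  unfolding polyU_def
proof (intro CollectI allI impI)
  fix m assume a: "u1 \<in> {p. \<forall>m. coeff p m \<noteq> 0 \<longrightarrow> 0 < m \<and> \<not> degree w dvd m}"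
    "u2 \<in> {p. \<forall>m. coeff p m \<noteq> 0 \<longrightarrow> 0 < m \<and> \<not> degree w dvd m}"
    "coeff (u1 - u2) m \<noteq> 0"
  hence "coeff u1 m \<noteq> 0 \<or> coeff u2 m \<noteq> 0" by auto
  thus "0 < m \<and> \<not> degree w dvd m" using a by blast
qed

lemma U_monom: "0 < n \<Longrightarrow> \<not> degree w dvd n \<Longrightarrow> monom c n \<in> polyU w"
  by (auto simp: polyU_def coeff_monom split: if_splits)

lemma U_0: "0 \<in> polyU w" by (auto simp: polyU_def)

lemma W_add: "v1 \<in> polyW w \<Longrightarrow> v2 \<in> polyW w \<Longrightarrow> v1 + v2 \<in> polyW w"
  unfolding polyW_def by (auto simp flip: pcompose_add)

lemma W_diff: "v1 \<in> polyW w \<Longrightarrow> v2 \<in> polyW w \<Longrightarrow> v1 - v2 \<in> polyW w"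
  unfolding polyW_def by (auto simp flip: pcompose_diff)

lemma W_const: "[:c:] \<in> polyW w"
  unfolding polyW_def by (rule CollectI, rule exI[of _ "[:c:]"]) simp

lemma pcompose_pow: "pcompose ([:0,1:] ^ k) w = w ^ k"
  by (induction k) (auto simp: pcompose_mult pcompose_1 pcompose_pCons)

lemma W_pow: "smult c (w ^ k) \<in> polyW w"
  unfolding polyW_def
  by (rule CollectI, rule exI[of _ "smult c ([:0,1:] ^ k)"]) (simp add: pcompose_smult pcompose_pow)

lemma UW_inter:
  assumes "degree w \<ge> 1" "u \<in> polyU w" "u \<in> polyW w" shows "u = 0"
proof (rule ccontr)
  assume nz: "u \<noteq> 0"
  from assms(3) obtain p where p: "u = pcompose p w" by (auto simp: polyW_def)
  have "coeff u (degree u) \<noteq> 0" using nz by simp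
  hence "0 < degree u" "\<not> degree w dvd degree u" using assms(2) by (auto simp: polyU_def)
  moreover have "degree u = degree p * degree w" using p by (simp add: degree_pcompose)
  ultimately show False by simp
qed

lemma exist:
  assumes "degree w \<ge> 1"
  shows "degree f \<le> n \<Longrightarrow> \<exists>u v. u \<in> polyU w \<and> v \<in> polyW w \<and> f = u + v \<and> degree u \<le> degree f"
proof (induction n arbitrary: f)
  case 0
  then have "[:coeff f 0:] = f" by (intro degree_0_id) simp
  then have "f \<in> polyW w" using W_const[of "coeff f 0" w] by simp
  then show ?case by (intro exI[of _ 0] exI[of _ f]) (simp add: U_0)
next
  case (Suc n)
  show ?case
  proof (cases "degree f \<le> n")
    case True then show ?thesis using Suc.IH by blast
  next
    case False
    hence df: "degree f = Suc n" using Suc.prems by simp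
    define c where "c = coeff f (Suc n)"
    show ?thesis
    proof (cases "degree w dvd Suc n")
      case False
      define g where "g = f - monom c (Suc n)"
      have "degree g \<le> n"
      proof (rule degree_le, intro allI impI)
        fix i assume "n < i"
        show "coeff g i = 0"
        proof (cases "i = Suc n")
          case True thus ?thesis by (simp add: g_def c_def)
        next
          case False
          hence "i > degree f" using \<open>n < i\<close> df by simp
          thus ?thesis using False by (simp add: g_def coeff_eq_0)
        qed
      qed
      then obtain u v where uv: "u \<in> polyU w" "v \<in> polyW w" "g = u + v" "degree u \<le> degree g"
        using Suc.IH by blast
      have "u + monom c (Suc n) \<in> polyU w" using U_add U_monom False uv(1) by blast
      moreover have "f = g + monom c (Suc n)" by (simp add: g_def)
      hence "f = (u + monom c (Suc n)) + v" using uv(3) by (simp add: algebra_simps)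
      moreover have "degree (u + monom c (Suc n)) \<le> degree f"
      proof (rule degree_add_le)
        show "degree u \<le> degree f" using uv(4) \<open>degree g \<le> n\<close> df by simp
        show "degree (monom c (Suc n)) \<le> degree f" using df degree_monom_le[of c "Suc n"] by simp
      qed
      ultimately show ?thesis using uv(2) by blast
    next
      case True
      then obtain k where k: "Suc n = degree w * k" by blast
      have w0: "w \<noteq> 0" using assms by auto
      define a where "a = c / lead_coeff w ^ k"
      define g where "g = f - smult a (w ^ k)"
      have dwk: "degree (w ^ k) = Suc n" using k w0 by (simp add: degree_power_eq)
      have lw: "coeff (w ^ k) (Suc n) = lead_coeff w ^ k"
        using dwk by (metis lead_coeff_power)
      have "degree g \<le> n"
      proof (rule degree_le, intro allI impI)
        fix i assume "n < i"
        show "coeff g i = 0"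
        proof (cases "i = Suc n")
          case True thus ?thesis using w0 lw by (simp add: g_def a_def c_def)
        next
          case False
          hence "i > degree f" "i > degree (w ^ k)" using \<open>n < i\<close> df dwk by auto
          thus ?thesis by (simp add: g_def coeff_eq_0)
        qed
      qed
      then obtain u v where uv: "u \<in> polyU w" "v \<in> polyW w" "g = u + v" "degree u \<le> degree g"
        using Suc.IH by blast
      have "v + smult a (w ^ k) \<in> polyW w" using W_add W_pow uv(2) by blast
      moreover have "f = g + smult a (w ^ k)" by (simp add: g_def)
      hence "f = u + (v + smult a (w ^ k))" using uv(3) by (simp add: algebra_simps)
      moreover have "degree u \<le> degree f" using uv(4) \<open>degree g \<le> n\<close> df by simp
      ultimately show ?thesis using uv(1) by blast
    qed
  qed
qed

lemma uniq:
  assumes "degree w \<ge> 1" "u1 \<in> polyU w" "v1 \<in> polyW w" "u2 \<in> polyU w" "v2 \<in> polyW w"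
    "u1 + v1 = u2 + v2"
  shows "u1 = u2"
proof -
  have "u1 - u2 = v2 - v1" using assms(6) by (simp add: algebra_simps)
  moreover have "u1 - u2 \<in> polyU w" using assms U_diff by blast
  moreover have "v2 - v1 \<in> polyW w" using assms W_diff by blast
  ultimately have "u1 - u2 = 0" using UW_inter assms(1) by metis
  thus ?thesis by simp
qed

lemma Ucomp_eq:
  assumes "degree w \<ge> 1" "u \<in> polyU w" "v \<in> polyW w" "f = u + v"
  shows "Ucomp w f = u"
  unfolding Ucomp_def
proof (rule the_equality)
  show "u \<in> polyU w \<and> f - u \<in> polyW w" using assms by simp
next
  fix f1 assume "f1 \<in> polyU w \<and> f - f1 \<in> polyW w"
  thus "f1 = u" using uniq[OF assms(1), of f1 "f - f1" u v] assms by auto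
qed

theorem lemma3p8:
  fixes w :: "'a::field poly"
  assumes "degree w \<ge> 2"
  shows "(\<forall>f. \<exists>!p. fst p \<in> polyU w \<and> snd p \<in> polyW w \<and> f = fst p + snd p)
       \<and> (\<forall>f. f \<noteq> 0 \<longrightarrow> ell w f \<le> degree f)
       \<and> (\<forall>f g. f - g \<in> polyW w \<longrightarrow> ell w f = ell w g)"
proof (intro conjI allI impI)
  have d1: "degree w \<ge> 1" using assms by simp
  note ex = exist[OF d1 order_refl]
  fix f
  show "\<exists>!p. fst p \<in> polyU w \<and> snd p \<in> polyW w \<and> f = fst p + snd p"
  proof -
    obtain u v where uv: "u \<in> polyU w" "v \<in> polyW w" "f = u + v" using ex by blast
    show ?thesis
    proof (rule ex1I[of _ "(u, v)"])
      show "fst (u, v) \<in> polyU w \<and> snd (u, v) \<in> polyW w \<and> f = fst (u, v) + snd (u, v)"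
        using uv by simp
    next
      fix p assume p: "fst p \<in> polyU w \<and> snd p \<in> polyW w \<and> f = fst p + snd p"
      hence "fst p = u" using uniq[OF d1, of "fst p" "snd p" u v] uv by auto
      moreover hence "snd p = v" using p uv by simp
      ultimately show "p = (u, v)" by (simp add: prod_eq_iff)
    qed
  qed
next
  have d1: "degree w \<ge> 1" using assms by simp
  fix f :: "'a poly"
  obtain u v where uv: "u \<in> polyU w" "v \<in> polyW w" "f = u + v" "degree u \<le> degree f"
    using exist[OF d1 order_refl] by blast
  have "Ucomp w f = u" using Ucomp_eq[OF d1 uv(1-3)] .
  thus "ell w f \<le> degree f" using uv(4) by (simp add: ell_def)
next
  have d1: "degree w \<ge> 1" using assms by simp
  fix f g :: "'a poly"
  assume fg: "f - g \<in> polyW w"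
  obtain u v where uv: "u \<in> polyU w" "v \<in> polyW w" "f = u + v"
    using exist[OF d1 order_refl] by blast
  have "Ucomp w f = u" using Ucomp_eq[OF d1 uv(1-3)] .
  moreover have "Ucomp w g = u"
    using Ucomp_eq[OF d1 uv(1) W_diff[OF uv(2) fg]] uv(3) by (simp add: algebra_simps)
  ultimately show "ell w f = ell w g" by (simp add: ell_def)
qed

end
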